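(* Let $n\ge1$. Every unitary on $n$ qubits of the form $C\,Z\,L$ (a $\textsc{P}$-layer $L$ applied first, then a $\textsc{CZ}$-layer $Z$, then a $\textsc{C}$-layer $C$; stage form -P-CZ-C-) can also be written as $Z'L'C'$ (stage form -C-P-CZ-) for some $\textsc{C}$-layer $C'$, $\textsc{P}$-layer $L'$ and $\textsc{CZ}$-layer $Z'$; and, since $\textsc{P}$-layers and $\textsc{CZ}$-layers commute, also in the stage forms -CZ-P-C- and -C-CZ-P-.
   Context: Gates: $\textsc{P}=\mathrm{diag}(1,i)$, $\textsc{CNOT}|a,b\rangle=|a,a\oplus b\rangle$, $\textsc{CZ}|a,b\rangle=(-1)^{ab}|a,b\rangle$. Layers on $n$ qubits: a $\textsc{P}$-layer is $\bigotimes_{j=1}^n \textsc{P}^{a_j}$ with $a_j\in\{0,1,2,3\}$; a $\textsc{C}$-layer is any unitary implemented by a circuit of $\textsc{CNOT}$ gates (equivalently $|x\rangle\mapsto|Ax\rangle$ for an invertible matrix $A$ over $\mathbb F_2$); a $\textsc{CZ}$-layer is any product of $\textsc{CZ}$ gates on pairs of the $n$ qubits. Stage notation -X-Y-Z- means X is applied first, then Y, then Z (operator product $ZYX$). *)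

theory Defs
  imports Complex_Main "Jordan_Normal_Form.Matrix"
begin

text \<open>The computational basis state |x_0 ... x_(n-1)> is indexed by the natural
  number x < 2^n whose j-th binary digit (bit x j) is the value of qubit j.\<close>

definition qdim :: "nat \<Rightarrow> nat" where
  "qdim n = 2 ^ n"

text \<open>P-layer: tensor product over j < n of P^(a j), P = diag(1, i).\<close>
definition P_layer :: "nat \<Rightarrow> (nat \<Rightarrow> nat) \<Rightarrow> complex mat" where
  "P_layer n a = mat (qdim n) (qdim n)
     (\<lambda>(y, x). if y = x then (\<Prod>j<n. \<i> ^ (a j * (if bit x j then 1 else 0))) else 0)"

definition is_P_layer :: "nat \<Rightarrow> complex mat \<Rightarrow> bool" where
  "is_P_layer n L \<longleftrightarrow> (\<exists>a. (\<forall>j<n. a j \<in> {0,1,2,3}) \<and> L = P_layer n a)"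

definition cnot_gate :: "nat \<Rightarrow> nat \<Rightarrow> nat \<Rightarrow> complex mat" where
  "cnot_gate n c t = mat (qdim n) (qdim n)
     (\<lambda>(y, x). if y = (if bit x c then flip_bit t x else x) then 1 else 0)"

definition cz_gate :: "nat \<Rightarrow> nat \<Rightarrow> nat \<Rightarrow> complex mat" where
  "cz_gate n j k = mat (qdim n) (qdim n)
     (\<lambda>(y, x). if y = x then (if bit x j \<and> bit x k then -1 else 1) else 0)"

definition circuit :: "nat \<Rightarrow> complex mat list \<Rightarrow> complex mat" where
  "circuit n gs = foldr (\<lambda>g U. U * g) gs (1\<^sub>m (qdim n))"

definition is_C_layer :: "nat \<Rightarrow> complex mat \<Rightarrow> bool" where
  "is_C_layer n C \<longleftrightarrow> (\<exists>cs. (\<forall>(c, t) \<in> set cs. c < n \<and> t < n \<and> c \<noteq> t) \<and>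
      C = circuit n (map (\<lambda>(c, t). cnot_gate n c t) cs))"

definition is_CZ_layer :: "nat \<Rightarrow> complex mat \<Rightarrow> bool" where
  "is_CZ_layer n Z \<longleftrightarrow> (\<exists>ps. (\<forall>(j, k) \<in> set ps. j < n \<and> k < n \<and> j \<noteq> k) \<and>
      Z = circuit n (map (\<lambda>(j, k). cz_gate n j k) ps))"

end

theory Submission
  imports Defs
begin

definition diag_m :: "nat \<Rightarrow> (nat \<Rightarrow> complex) \<Rightarrow> complex mat" where
  "diag_m n f = mat (qdim n) (qdim n) (\<lambda>(y, x). if y = x then f x else 0)"

lemma diag_carrier[simp]: "diag_m n f \<in> carrier_mat (qdim n) (qdim n)"
  by (simp add: diag_m_def)

lemma cnot_carrier[simp]: "cnot_gate n c t \<in> carrier_mat (qdim n) (qdim n)"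
  by (simp add: cnot_gate_def)

lemma diag_mult_left:
  assumes "A \<in> carrier_mat (qdim n) m"
  shows "diag_m n f * A = mat (qdim n) m (\<lambda>(y,x). f y * A $$ (y,x))"
proof (rule eq_matI)
  fix i j assume ij: "i < dim_row (mat (qdim n) m (\<lambda>(y,x). f y * A $$ (y,x)))"
     "j < dim_col (mat (qdim n) m (\<lambda>(y,x). f y * A $$ (y,x)))"
  have "(diag_m n f * A) $$ (i,j) = (\<Sum>k\<in>{0..<qdim n}. (if i = k then f k else 0) * A $$ (k,j))"
    using ij assms by (simp add: diag_m_def scalar_prod_def)
  also have "\<dots> = (\<Sum>k\<in>{0..<qdim n}. if k = i then f i * A $$ (i,j) else 0)"
    by (rule sum.cong) auto
  also have "\<dots> = f i * A $$ (i,j)"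
    using ij by simp
  finally show "(diag_m n f * A) $$ (i,j) = mat (qdim n) m (\<lambda>(y,x). f y * A $$ (y,x)) $$ (i,j)"
    using ij by simp
qed (use assms in \<open>auto simp: diag_m_def\<close>)

lemma diag_mult_right:
  assumes "A \<in> carrier_mat m (qdim n)"
  shows "A * diag_m n f = mat m (qdim n) (\<lambda>(y,x). A $$ (y,x) * f x)"
proof (rule eq_matI)
  fix i j assume ij: "i < dim_row (mat m (qdim n) (\<lambda>(y,x). A $$ (y,x) * f x))"
     "j < dim_col (mat m (qdim n) (\<lambda>(y,x). A $$ (y,x) * f x))"
  have "(A * diag_m n f) $$ (i,j) = (\<Sum>k\<in>{0..<qdim n}. A $$ (i,k) * (if k = j then f j else 0))"
    using ij assms by (simp add: diag_m_def scalar_prod_def)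
  also have "\<dots> = (\<Sum>k\<in>{0..<qdim n}. if k = j then A $$ (i,j) * f j else 0)"
    by (rule sum.cong) auto
  also have "\<dots> = A $$ (i,j) * f j"
    using ij by simp
  finally show "(A * diag_m n f) $$ (i,j) = mat m (qdim n) (\<lambda>(y,x). A $$ (y,x) * f x) $$ (i,j)"
    using ij by simp
qed (use assms in \<open>auto simp: diag_m_def\<close>)

lemma diag_mult: "diag_m n f * diag_m n g = diag_m n (\<lambda>x. f x * g x)"
  by (subst diag_mult_left[OF diag_carrier]) (auto simp: diag_m_def)

lemma diag_comm: "diag_m n f * diag_m n g = diag_m n g * diag_m n f"
  by (simp add: diag_mult mult.commute)

definition pmap :: "nat \<Rightarrow> nat \<Rightarrow> nat \<Rightarrow> nat" where
  "pmap c t x = (if bit x c then flip_bit t x else x)"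

lemma bit_pmap: "c \<noteq> t \<Longrightarrow> bit (pmap c t x) j = (if j = t then (bit x t \<noteq> bit x c) else bit x j)"
  by (auto simp: pmap_def bit_flip_bit_iff)

lemma pmap_inv: "c \<noteq> t \<Longrightarrow> pmap c t (pmap c t x) = x"
  by (rule bit_eqI) (auto simp: bit_pmap)

lemma cnot_diag:
  assumes "c \<noteq> t"
  shows "cnot_gate n c t * diag_m n f = diag_m n (\<lambda>x. f (pmap c t x)) * cnot_gate n c t"
  apply (subst diag_mult_right[OF cnot_carrier])
  apply (subst diag_mult_left[OF cnot_carrier])
  apply (rule eq_matI)
  using pmap_inv[OF assms] by (auto simp: cnot_gate_def pmap_def[symmetric])


lemma circuit_Cons: "circuit n (g # gs) = circuit n gs * g"
  by (simp add: circuit_def)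

lemma circuit_carrier:
  "(\<forall>g\<in>set gs. g \<in> carrier_mat (qdim n) (qdim n)) \<Longrightarrow> circuit n gs \<in> carrier_mat (qdim n) (qdim n)"
  by (induction gs) (auto simp: circuit_def)

lemma circuit_diag:
  "circuit n (map (\<lambda>q. diag_m n (h q)) qs) = diag_m n (\<lambda>x. prod_list (map (\<lambda>q. h q x) qs))"
proof (induction qs)
  case Nil
  show ?case by (auto simp: circuit_def diag_m_def one_mat_def)
next
  case (Cons q qs)
  show ?case by (simp add: circuit_Cons Cons diag_mult mult.commute)
qed

inductive phase_fn :: "nat \<Rightarrow> (nat \<Rightarrow> complex) \<Rightarrow> bool" for n where
  one: "phase_fn n (\<lambda>x. 1)"
| lin: "j < n \<Longrightarrow> phase_fn n f \<Longrightarrow> phase_fn n (\<lambda>x. f x * \<i> ^ (if bit x j then 1 else 0))"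
| cz: "j < n \<Longrightarrow> k < n \<Longrightarrow> j \<noteq> k \<Longrightarrow> phase_fn n f \<Longrightarrow>
     phase_fn n (\<lambda>x. f x * (if bit x j \<and> bit x k then -1 else 1))"

lemma phase_fn_cong: "phase_fn n f \<Longrightarrow> (\<And>x. g x = f x) \<Longrightarrow> phase_fn n g"
proof -
  assume "phase_fn n f" "\<And>x. g x = f x"
  then have "g = f" by auto
  then show ?thesis using \<open>phase_fn n f\<close> by simp
qed

lemma phase_fn_mult: "phase_fn n g \<Longrightarrow> phase_fn n f \<Longrightarrow> phase_fn n (\<lambda>x. f x * g x)"
proof (induction rule: phase_fn.induct)
  case one
  then show ?case by simp
next
  case (lin j g)
  have "phase_fn n (\<lambda>x. (f x * g x) * \<i> ^ (if bit x j then 1 else 0))"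
    by (rule phase_fn.lin[OF lin(1) lin(3)[OF lin(4)]])
  then show ?case by (rule phase_fn_cong) (simp add: mult.assoc)
next
  case (cz j k g)
  have "phase_fn n (\<lambda>x. (f x * g x) * (if bit x j \<and> bit x k then -1 else 1))"
    by (rule phase_fn.cz[OF cz(1,2,3) cz(5)[OF cz(6)]])
  then show ?case by (rule phase_fn_cong) (simp add: mult.assoc)
qed

lemma phase_e: "j < n \<Longrightarrow> phase_fn n (\<lambda>x. \<i> ^ (if bit x j then 1 else 0))"
  by (rule phase_fn_cong[OF phase_fn.lin[OF _ phase_fn.one]]) auto

lemma phase_z: "j < n \<Longrightarrow> k < n \<Longrightarrow> j \<noteq> k \<Longrightarrow> phase_fn n (\<lambda>x. if bit x j \<and> bit x k then -1 else 1)"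
  by (rule phase_fn_cong[OF phase_fn.cz[OF _ _ _ phase_fn.one]]) auto

lemma phase_mult3: "phase_fn n f \<Longrightarrow> phase_fn n g \<Longrightarrow> phase_fn n h \<Longrightarrow> (\<And>x. u x = f x * g x * h x) \<Longrightarrow> phase_fn n u"
  by (rule phase_fn_cong[OF phase_fn_mult[OF _ phase_fn_mult]]) auto

lemma phase_fn_pmap:
  assumes "phase_fn n f" "c < n" "t < n" "c \<noteq> t"
  shows "phase_fn n (\<lambda>x. f (pmap c t x))"
  using assms(1)
proof (induction rule: phase_fn.induct)
  case one
  then show ?case by (rule phase_fn.one)
next
  case (lin j f)
  have "phase_fn n (\<lambda>x. \<i> ^ (if bit (pmap c t x) j then 1 else 0))"
  proof (cases "j = t")
    case True
    show ?thesis
      by (rule phase_mult3[OF phase_e[OF assms(3)] phase_e[OF assms(2)] phase_z[OF assms(3,2)]])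
        (use True assms(4) in \<open>auto simp: bit_pmap\<close>)
  next
    case False
    show ?thesis using phase_e[OF lin(1)] False assms(4) by (simp add: bit_pmap)
  qed
  from phase_fn_mult[OF this lin(3)] show ?case by simp
next
  case (cz j k f)
  have "phase_fn n (\<lambda>x. if bit (pmap c t x) j \<and> bit (pmap c t x) k then -1 else 1)"
  proof -
    consider "j = t" "k = c" | "j = t" "k \<noteq> c" | "k = t" "j = c" | "k = t" "j \<noteq> c" | "j \<noteq> t" "k \<noteq> t"
      by blast
    then show ?thesis
    proof cases
      case 1
      show ?thesis
        by (rule phase_mult3[OF phase_z[OF assms(3,2) assms(4)[symmetric]] phase_e[OF assms(2)] phase_e[OF assms(2)]])
          (use 1 assms(4) in \<open>auto simp: bit_pmap\<close>)
    next
      case 2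
      show ?thesis
        by (rule phase_mult3[OF phase_z[OF assms(3) cz(2)] phase_z[OF assms(2) cz(2)] phase_fn.one])
          (use 2 cz(3) assms(4) in \<open>auto simp: bit_pmap\<close>)
    next
      case 3
      show ?thesis
        by (rule phase_mult3[OF phase_z[OF assms(3,2) assms(4)[symmetric]] phase_e[OF assms(2)] phase_e[OF assms(2)]])
          (use 3 assms(4) in \<open>auto simp: bit_pmap\<close>)
    next
      case 4
      show ?thesis
        by (rule phase_mult3[OF phase_z[OF assms(3) cz(1)] phase_z[OF assms(2) cz(1)] phase_fn.one])
          (use 4 cz(3) assms(4) in \<open>auto simp: bit_pmap\<close>)
    next
      case 5
      show ?thesis using phase_z[OF cz(1,2,3)] 5 assms(4) by (simp add: bit_pmap)
    qed
  qed
  from phase_fn_mult[OF this cz(5)] show ?case by simp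
qed


lemma C_layer_diag:
  assumes "\<forall>(c, t) \<in> set cs. c < n \<and> t < n \<and> c \<noteq> t"
  shows "phase_fn n f \<Longrightarrow> \<exists>g. phase_fn n g \<and>
     circuit n (map (\<lambda>(c, t). cnot_gate n c t) cs) * diag_m n f = diag_m n g * circuit n (map (\<lambda>(c, t). cnot_gate n c t) cs)"
  using assms
proof (induction cs arbitrary: f)
  case Nil
  have "1\<^sub>m (qdim n) * diag_m n f = diag_m n f * 1\<^sub>m (qdim n)"
    by (simp add: left_mult_one_mat[OF diag_carrier] right_mult_one_mat[OF diag_carrier])
  then show ?case using Nil by (auto simp: circuit_def)
next
  case (Cons ct cs)
  obtain c t where ct: "ct = (c, t)" by fastforce
  have v: "c < n" "t < n" "c \<noteq> t" using Cons.prems ct by auto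
  let ?C = "circuit n (map (\<lambda>(c, t). cnot_gate n c t) cs)"
  have Cc: "?C \<in> carrier_mat (qdim n) (qdim n)" by (rule circuit_carrier) auto
  have pf: "phase_fn n (\<lambda>x. f (pmap c t x))" by (rule phase_fn_pmap[OF Cons.prems(1) v])
  obtain g where g: "phase_fn n g" "?C * diag_m n (\<lambda>x. f (pmap c t x)) = diag_m n g * ?C"
    using Cons.IH[OF pf] Cons.prems by auto
  have "circuit n (map (\<lambda>(c, t). cnot_gate n c t) (ct # cs)) * diag_m n f
      = ?C * (cnot_gate n c t * diag_m n f)"
    using Cc by (simp add: ct circuit_Cons assoc_mult_mat[OF Cc cnot_carrier diag_carrier])
  also have "\<dots> = ?C * (diag_m n (\<lambda>x. f (pmap c t x)) * cnot_gate n c t)"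
    by (simp add: cnot_diag v)
  also have "\<dots> = (?C * diag_m n (\<lambda>x. f (pmap c t x))) * cnot_gate n c t"
    by (simp add: assoc_mult_mat[OF Cc diag_carrier cnot_carrier])
  also have "\<dots> = diag_m n g * (?C * cnot_gate n c t)"
    by (simp add: g assoc_mult_mat[OF diag_carrier Cc cnot_carrier])
  also have "\<dots> = diag_m n g * circuit n (map (\<lambda>(c, t). cnot_gate n c t) (ct # cs))"
    by (simp add: ct circuit_Cons)
  finally show ?case using g by blast
qed

lemma i_pow_mod4: "\<i> ^ m = \<i> ^ (m mod 4)"
proof -
  have i4: "\<i> ^ 4 = (1::complex)"
  proof -
    have "\<i> ^ 4 = \<i>^2 * (\<i>^2 :: complex)" by (simp add: power_add[symmetric])
    then show ?thesis by simp
  qed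
  have "\<i> ^ m = (\<i> ^ 4) ^ (m div 4) * \<i> ^ (m mod 4)"
    by (metis div_mult_mod_eq power_add power_mult mult.commute)
  then show ?thesis using i4 by simp
qed

lemma prod_upd:
  fixes a b :: "nat \<Rightarrow> nat" and j n :: nat
  assumes "j < n"
  shows "(\<Prod>l<n. \<i> ^ ((a(j := a j + 1)) l * b l)) = (\<Prod>l<n. \<i> ^ (a l * b l)) * \<i> ^ b j"
proof -
  have "(\<Prod>l<n. \<i> ^ ((a(j := a j + 1)) l * b l)) = \<i> ^ ((a j + 1) * b j) * (\<Prod>l\<in>{..<n} - {j}. \<i> ^ ((a(j := a j + 1)) l * b l))"
    by (subst prod.remove[OF finite_lessThan, of j]) (use assms in auto)
  moreover have "(\<Prod>l\<in>{..<n} - {j}. \<i> ^ ((a(j := a j + 1)) l * b l)) = (\<Prod>l\<in>{..<n} - {j}. \<i> ^ (a l * b l))"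
    by (rule prod.cong) auto
  moreover have "(\<Prod>l<n. \<i> ^ (a l * b l)) = \<i> ^ (a j * b j) * (\<Prod>l\<in>{..<n} - {j}. \<i> ^ (a l * b l))"
    by (subst prod.remove[OF finite_lessThan, of j]) (use assms in auto)
  ultimately show ?thesis by (simp add: algebra_simps power_add)
qed

definition czf :: "(nat \<times> nat) list \<Rightarrow> nat \<Rightarrow> complex" where
  "czf ps x = prod_list (map (\<lambda>(j, k). if bit x j \<and> bit x k then -1 else 1) ps)"

definition plf :: "nat \<Rightarrow> (nat \<Rightarrow> nat) \<Rightarrow> nat \<Rightarrow> complex" where
  "plf n a x = (\<Prod>j<n. \<i> ^ (a j * (if bit x j then 1 else 0)))"

lemma phase_fn_layers:
  "phase_fn n f \<Longrightarrow> \<exists>a ps. (\<forall>(j, k) \<in> set ps. j < n \<and> k < n \<and> j \<noteq> k) \<and> (\<forall>x. f x = czf ps x * plf n a x)"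
proof (induction rule: phase_fn.induct)
  case one
  show ?case by (rule exI[of _ "\<lambda>_. 0"], rule exI[of _ "[]"]) (simp add: czf_def plf_def)
next
  case (lin j f)
  then obtain a ps where ap: "\<forall>(j, k) \<in> set ps. j < n \<and> k < n \<and> j \<noteq> k" "\<forall>x. f x = czf ps x * plf n a x"
    by blast
  have "\<forall>x. f x * \<i> ^ (if bit x j then 1 else 0) = czf ps x * plf n (a(j := a j + 1)) x"
  proof
    fix x :: nat
    have pu: "(\<Prod>l<n. \<i> ^ ((a(j := a j + 1)) l * (if bit x l then 1 else 0))) = (\<Prod>l<n. \<i> ^ (a l * (if bit x l then 1 else 0))) * \<i> ^ (if bit x j then 1 else 0)"
      by (rule prod_upd[OF lin(1)])
    show "f x * \<i> ^ (if bit x j then 1 else 0) = czf ps x * plf n (a(j := a j + 1)) x"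
      unfolding plf_def pu using ap(2) by (simp add: plf_def mult.assoc)
  qed
  then show ?case using ap(1) by blast
next
  case (cz j k f)
  then obtain a ps where ap: "\<forall>(j, k) \<in> set ps. j < n \<and> k < n \<and> j \<noteq> k" "\<forall>x. f x = czf ps x * plf n a x"
    by blast
  have "\<forall>x. f x * (if bit x j \<and> bit x k then -1 else 1) = czf ((j,k) # ps) x * plf n a x"
    using ap(2) by (simp add: czf_def algebra_simps)
  moreover have "\<forall>(j', k') \<in> set ((j,k) # ps). j' < n \<and> k' < n \<and> j' \<noteq> k'" using ap(1) cz(1,2,3) by auto
  ultimately show ?case by blast
qed

lemma plf_mod4: "plf n a x = plf n (\<lambda>j. a j mod 4) x"
  unfolding plf_def
proof (rule prod.cong)
  fix j
  have "\<i> ^ (a j * b) = \<i> ^ (a j mod 4 * b)" for b :: nat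
  proof -
    have "\<i> ^ (a j * b) = (\<i> ^ a j) ^ b" by (simp add: power_mult)
    also have "\<dots> = (\<i> ^ (a j mod 4)) ^ b" by (subst i_pow_mod4) simp
    finally show ?thesis by (simp add: power_mult)
  qed
  then show "\<i> ^ (a j * (if bit x j then 1 else 0)) = \<i> ^ (a j mod 4 * (if bit x j then 1 else 0))" .
qed simp

lemma phase_pow: "j < n \<Longrightarrow> phase_fn n (\<lambda>x. \<i> ^ (m * (if bit x j then 1 else 0)))"
proof (induction m)
  case 0
  then show ?case using phase_fn.one by simp
next
  case (Suc m)
  show ?case
    by (rule phase_fn_cong[OF phase_fn.lin[OF Suc(2) Suc(1)[OF Suc(2)]]]) (simp add: power_add)
qed

lemma phase_plf: "m \<le> n \<Longrightarrow> phase_fn n (\<lambda>x. \<Prod>j<m. \<i> ^ (a j * (if bit x j then 1 else 0)))"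
proof (induction m)
  case 0
  then show ?case using phase_fn.one by simp
next
  case (Suc m)
  show ?case
    by (rule phase_fn_cong[OF phase_fn_mult[OF phase_pow Suc(1)]]) (use Suc(2) in auto)
qed

lemma phase_czf: "\<forall>(j, k) \<in> set ps. j < n \<and> k < n \<and> j \<noteq> k \<Longrightarrow> phase_fn n (czf ps)"
proof (induction ps)
  case Nil
  then show ?case using phase_fn.one by (simp add: czf_def)
next
  case (Cons q ps)
  obtain j k where q: "q = (j, k)" by fastforce
  have "phase_fn n (\<lambda>x. czf ps x * (if bit x j \<and> bit x k then -1 else 1))"
    by (rule phase_fn.cz) (use Cons q in auto)
  then show ?case
    by (rule phase_fn_cong) (simp add: q czf_def mult.commute)
qed

lemma cz_circ: "circuit n (map (\<lambda>(j, k). cz_gate n j k) ps) = diag_m n (czf ps)"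
proof (induction ps)
  case Nil
  show ?case by (auto simp: circuit_def diag_m_def one_mat_def czf_def)
next
  case (Cons q ps)
  obtain j k where q: "q = (j, k)" by fastforce
  have "cz_gate n j k = diag_m n (\<lambda>x. if bit x j \<and> bit x k then -1 else 1)"
    by (simp add: cz_gate_def diag_m_def)
  then show ?case
    by (simp add: q circuit_Cons Cons diag_mult czf_def[abs_def] mult.commute)
qed

lemma cz_layer_diag: "is_CZ_layer n Z \<Longrightarrow> \<exists>ps. (\<forall>(j, k) \<in> set ps. j < n \<and> k < n \<and> j \<noteq> k) \<and> Z = diag_m n (czf ps)"
  unfolding is_CZ_layer_def cz_circ by blast

lemma cz_layer_of: "\<forall>(j, k) \<in> set ps. j < n \<and> k < n \<and> j \<noteq> k \<Longrightarrow> is_CZ_layer n (diag_m n (czf ps))"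
  unfolding is_CZ_layer_def cz_circ by blast

lemma P_layer_diag: "P_layer n a = diag_m n (plf n a)"
  unfolding P_layer_def diag_m_def plf_def ..


theorem mainTheorem2:
  fixes n :: nat and C Z L :: "complex mat"
  assumes "n \<ge> 1"
    and "is_P_layer n L" and "is_CZ_layer n Z" and "is_C_layer n C"
  shows "(\<exists>C' L' Z'. is_C_layer n C' \<and> is_P_layer n L' \<and> is_CZ_layer n Z' \<and>
            C * Z * L = Z' * L' * C')
       \<and> (\<exists>C' L' Z'. is_C_layer n C' \<and> is_P_layer n L' \<and> is_CZ_layer n Z' \<and>
            C * Z * L = C' * L' * Z')
       \<and> (\<exists>C' L' Z'. is_C_layer n C' \<and> is_P_layer n L' \<and> is_CZ_layer n Z' \<and>
            C * Z * L = L' * Z' * C')"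
proof -
  obtain a where a: "\<forall>j<n. a j \<in> {0,1,2,3}" "L = P_layer n a"
    using assms(2) unfolding is_P_layer_def by blast
  obtain ps where ps: "\<forall>(j, k) \<in> set ps. j < n \<and> k < n \<and> j \<noteq> k" "Z = diag_m n (czf ps)"
    using cz_layer_diag[OF assms(3)] by blast
  obtain cs where cs: "\<forall>(c, t) \<in> set cs. c < n \<and> t < n \<and> c \<noteq> t"
    "C = circuit n (map (\<lambda>(c, t). cnot_gate n c t) cs)"
    using assms(4) unfolding is_C_layer_def by blast
  have Cc: "C \<in> carrier_mat (qdim n) (qdim n)" unfolding cs(2) by (rule circuit_carrier) auto
  have L: "L = diag_m n (plf n a)" by (simp add: a(2) P_layer_diag)
  define f where "f = (\<lambda>x. czf ps x * plf n a x)"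
  have pl: "phase_fn n (plf n a)"
    using phase_plf[of n n a] by (simp add: plf_def[abs_def])
  have pf: "phase_fn n f" unfolding f_def by (rule phase_fn_mult[OF pl phase_czf[OF ps(1)]])
  have ZL: "Z * L = diag_m n f" by (simp add: ps(2) L diag_mult f_def)
  obtain g where g: "phase_fn n g" "C * diag_m n f = diag_m n g * C"
    using C_layer_diag[OF cs(1) pf] cs(2) by blast
  obtain a' ps' where ap: "\<forall>(j, k) \<in> set ps'. j < n \<and> k < n \<and> j \<noteq> k" "\<forall>x. g x = czf ps' x * plf n a' x"
    using phase_fn_layers[OF g(1)] by blast
  define L' where "L' = P_layer n (\<lambda>j. a' j mod 4)"
  define Z' where "Z' = diag_m n (czf ps')"
  have L'P: "is_P_layer n L'" unfolding L'_def is_P_layer_def by (rule exI[of _ "\<lambda>j. a' j mod 4"]) auto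
  have Z'P: "is_CZ_layer n Z'" unfolding Z'_def by (rule cz_layer_of[OF ap(1)])
  have gfun: "g = (\<lambda>x. czf ps' x * plf n (\<lambda>j. a' j mod 4) x)"
    using ap(2) plf_mod4 by auto
  have ZL': "Z' * L' = diag_m n g" by (simp add: Z'_def L'_def P_layer_diag diag_mult gfun)
  have LZ': "L' * Z' = diag_m n g" using ZL' by (simp add: Z'_def L'_def P_layer_diag diag_comm)
  have main: "C * Z * L = diag_m n g * C"
  proof -
    have "C * Z * L = C * (Z * L)"
      by (simp add: ps(2) L assoc_mult_mat[OF Cc diag_carrier diag_carrier])
    then show ?thesis using ZL g(2) by simp
  qed
  have e1: "C * Z * L = Z' * L' * C" using main ZL' by simp
  have e3: "C * Z * L = L' * Z' * C" using main LZ' by simp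
  have e2: "C * Z * L = C * L * Z"
    by (simp add: ps(2) L assoc_mult_mat[OF Cc diag_carrier diag_carrier] diag_comm)
  show ?thesis using e1 e2 e3 assms(2,3,4) L'P Z'P by blast
qed

end
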